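(* Let $A$ and $B$ be commutative rings with identity and let $\phi: A\to B$ be a surjective ring homomorphism whose kernel is the principal ideal $\ker(\phi)=\langle \pi\rangle$ for some $\pi\in A$. If $I$ is an ideal of $A$ such that $\phi(I)$ is generated by $n$ elements, then there exist $a_1,a_2,\dots,a_n\in I$ such that $$I=\langle a_1,a_2,\dots,a_n\rangle+\pi(I:\pi).$$ In particular, if $B$ is Noetherian, then for every ideal $I$ of $A$ there exist a positive integer $n$ and elements $a_1,\dots,a_n\in I$ such that $I=\langle a_1,\dots,a_n\rangle+\pi(I:\pi)$.
   Context: For ideals $I,J$ of a commutative ring $R$, the ideal quotient is $(I:J)=\{x\in R: xJ\subseteq I\}$, and $(I:a)$ denotes $(I:\langle a\rangle)$. For an ideal $K$ and $\pi\in A$, $\pi K=\{\pi k: k\in K\}$. *)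

theory Defs
  imports "HOL-Algebra.Algebra"
begin

definition elem_ideal_quotient :: "('a, 'm) ring_scheme \<Rightarrow> 'a set \<Rightarrow> 'a \<Rightarrow> 'a set"
  where "elem_ideal_quotient R I a = {x \<in> carrier R. x \<otimes>\<^bsub>R\<^esub> a \<in> I}"

definition elem_times_set :: "('a, 'm) ring_scheme \<Rightarrow> 'a \<Rightarrow> 'a set \<Rightarrow> 'a set"
  where "elem_times_set R p K = {p \<otimes>\<^bsub>R\<^esub> k | k. k \<in> K}"

end

theory Submission
  imports Defs
begin

lemma img_ideal:
  assumes "ring_hom_cring A B h" "h ` carrier A = carrier B" "ideal J A"
  shows "ideal (h ` J) B"
proof -
  interpret ring_hom_cring A B h by fact
  interpret J: ideal J A by fact
  have sub: "h ` J \<subseteq> carrier B" using J.Icarr by auto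
  show ?thesis
  proof (rule idealI[OF S.ring_axioms])
    show "subgroup (h ` J) (add_monoid B)"
    proof (rule S.add.subgroupI)
      show "h ` J \<subseteq> carrier B" using sub by simp
      show "h ` J \<noteq> {}" using J.zero_closed by blast
      fix a assume "a \<in> h ` J"
      then obtain x where x: "x \<in> J" "a = h x" by auto
      then have "h (\<ominus>\<^bsub>A\<^esub> x) = \<ominus>\<^bsub>B\<^esub> a"
        using J.Icarr by simp
      then show "\<ominus>\<^bsub>B\<^esub> a \<in> h ` J" using x J.a_inv_closed by (metis image_eqI)
    next
      fix a b assume "a \<in> h ` J" "b \<in> h ` J"
      then obtain x y where "x \<in> J" "y \<in> J" "a = h x" "b = h y" by auto
      then show "a \<oplus>\<^bsub>B\<^esub> b \<in> h ` J"
        using J.Icarr J.a_closed by (metis hom_add image_eqI)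
    qed
  next
    fix a x assume "a \<in> h ` J" "x \<in> carrier B"
    then obtain y z where "y \<in> J" "a = h y" "z \<in> carrier A" "x = h z" using assms(2) by (metis imageE)
    then show "x \<otimes>\<^bsub>B\<^esub> a \<in> h ` J" "a \<otimes>\<^bsub>B\<^esub> x \<in> h ` J"
      using J.Icarr J.I_l_closed J.I_r_closed by (metis hom_mult image_eqI)+
  qed
qed

lemma part1:
  fixes A :: "('a, 'm) ring_scheme" and B :: "('b, 'n) ring_scheme"
    and \<phi> :: "'a \<Rightarrow> 'b" and \<pi> :: 'a
  assumes cA: "cring A" and cB: "cring B"
    and hom: "\<phi> \<in> ring_hom A B" and surj: "\<phi> ` carrier A = carrier B"
    and pi: "\<pi> \<in> carrier A"
    and ker: "a_kernel A B \<phi> = PIdl\<^bsub>A\<^esub> \<pi>"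
    and I: "ideal I A"
    and bc: "\<forall>i<n. b i \<in> carrier B" and bI: "\<phi> ` I = Idl\<^bsub>B\<^esub> (b ` {..<n})"
  shows "\<exists>a :: nat \<Rightarrow> 'a. (\<forall>i<n. a i \<in> I) \<and>
               I = Idl\<^bsub>A\<^esub> (a ` {..<n}) <+>\<^bsub>A\<^esub> elem_times_set A \<pi> (elem_ideal_quotient A I \<pi>)"
proof -
  interpret H: ring_hom_cring A B \<phi>
    using cA cB hom by (simp add: ring_hom_cring_def ring_hom_cring_axioms_def)
  interpret I: ideal I A by fact
  have "\<forall>i. \<exists>x. i < n \<longrightarrow> x \<in> I \<and> \<phi> x = b i"
  proof
    fix i
    show "\<exists>x. i < n \<longrightarrow> x \<in> I \<and> \<phi> x = b i"
    proof (cases "i < n")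
      case True
      have "b ` {..<n} \<subseteq> carrier B" using bc by auto
      then have "b i \<in> Idl\<^bsub>B\<^esub> (b ` {..<n})" using True H.S.genideal_self by blast
      then show ?thesis using bI by (metis imageE)
    qed simp
  qed
  from choice[OF this] obtain a where a0: "\<forall>i. i < n \<longrightarrow> a i \<in> I \<and> \<phi> (a i) = b i" by blast
  then have a: "\<And>i. i < n \<Longrightarrow> a i \<in> I \<and> \<phi> (a i) = b i" by blast
  define J where "J = Idl\<^bsub>A\<^esub> (a ` {..<n})"
  have aI: "a ` {..<n} \<subseteq> I" using a by auto
  have Jid: "ideal J A" unfolding J_def
    using aI I.Icarr by (intro H.R.genideal_ideal) auto
  have JI: "J \<subseteq> I" unfolding J_def using H.R.genideal_minimal[OF I aI] .
  have imJ: "ideal (\<phi> ` J) B" using img_ideal[OF H.ring_hom_cring_axioms surj Jid] .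
  have "b ` {..<n} \<subseteq> \<phi> ` J"
  proof
    fix y assume "y \<in> b ` {..<n}"
    then obtain i where i: "i < n" "y = b i" by auto
    have "a i \<in> J" unfolding J_def using aI I.Icarr i H.R.genideal_self by blast
    then show "y \<in> \<phi> ` J" using a[OF i(1)] i(2) by (metis image_eqI)
  qed
  then have IJ: "\<phi> ` I \<subseteq> \<phi> ` J" using bI H.S.genideal_minimal[OF imJ] by simp
  interpret Jd: ideal J A by (rule Jid)
  let ?P = "elem_times_set A \<pi> (elem_ideal_quotient A I \<pi>)"
  have "I = J <+>\<^bsub>A\<^esub> ?P"
  proof
    show "I \<subseteq> J <+>\<^bsub>A\<^esub> ?P"
    proof
      fix x assume x: "x \<in> I"
      have "\<phi> x \<in> \<phi> ` J" using IJ x by blast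
      then obtain y where y: "y \<in> J" "\<phi> y = \<phi> x" by (auto simp del: H.hom_add)
      have yI: "y \<in> I" using y JI by blast
      have xc: "x \<in> carrier A" "y \<in> carrier A" using x yI I.Icarr by auto
      have "\<phi> (x \<ominus>\<^bsub>A\<^esub> y) = \<zero>\<^bsub>B\<^esub>"
      proof -
        have e1: "\<phi> (x \<oplus>\<^bsub>A\<^esub> \<ominus>\<^bsub>A\<^esub> y) = \<phi> x \<oplus>\<^bsub>B\<^esub> \<phi> (\<ominus>\<^bsub>A\<^esub> y)"
          by (rule H.hom_add[OF xc(1) H.R.a_inv_closed[OF xc(2)]])
        have e2: "\<phi> (\<ominus>\<^bsub>A\<^esub> y) = \<ominus>\<^bsub>B\<^esub> \<phi> y" by (rule H.hom_a_inv[OF xc(2)])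
        have e3: "\<phi> x \<oplus>\<^bsub>B\<^esub> \<ominus>\<^bsub>B\<^esub> \<phi> x = \<zero>\<^bsub>B\<^esub>" by (rule H.S.r_neg[OF H.hom_closed[OF xc(1)]])
        show ?thesis unfolding a_minus_def e1 e2 y(2) e3 ..
      qed
      then have "x \<ominus>\<^bsub>A\<^esub> y \<in> a_kernel A B \<phi>" unfolding a_kernel_def' using xc \<open>\<phi> (x \<ominus>\<^bsub>A\<^esub> y) = \<zero>\<^bsub>B\<^esub>\<close> H.R.minus_closed by blast
      then obtain k where k: "k \<in> carrier A" "x \<ominus>\<^bsub>A\<^esub> y = k \<otimes>\<^bsub>A\<^esub> \<pi>"
        using ker unfolding cgenideal_def by blast
      have "x \<ominus>\<^bsub>A\<^esub> y \<in> I" using x yI unfolding a_minus_def by (intro I.a_closed I.a_inv_closed)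
      then have kq: "k \<in> elem_ideal_quotient A I \<pi>" using k unfolding elem_ideal_quotient_def by (metis (mono_tags, lifting) mem_Collect_eq)
      have pk: "\<pi> \<otimes>\<^bsub>A\<^esub> k \<in> ?P" using kq unfolding elem_times_set_def by blast
      have "x = y \<oplus>\<^bsub>A\<^esub> (\<pi> \<otimes>\<^bsub>A\<^esub> k)"
      proof -
        have "\<pi> \<otimes>\<^bsub>A\<^esub> k = x \<ominus>\<^bsub>A\<^esub> y" using k(2) H.R.m_comm[OF pi k(1)] by simp
        also have "y \<oplus>\<^bsub>A\<^esub> (x \<ominus>\<^bsub>A\<^esub> y) = x \<oplus>\<^bsub>A\<^esub> (y \<oplus>\<^bsub>A\<^esub> \<ominus>\<^bsub>A\<^esub> y)"
          unfolding a_minus_def by (rule H.R.add.m_lcomm[OF xc(2) xc(1) H.R.a_inv_closed[OF xc(2)]])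
        also have "\<dots> = x" using xc by (simp add: H.R.r_neg)
        finally show ?thesis by simp
      qed
      then show "x \<in> J <+>\<^bsub>A\<^esub> ?P" unfolding set_add_def' using y(1) pk by blast
    qed
  next
    show "J <+>\<^bsub>A\<^esub> ?P \<subseteq> I"
    proof
      fix x assume "x \<in> J <+>\<^bsub>A\<^esub> ?P"
      then obtain j p where jp: "j \<in> J" "p \<in> ?P" "x = j \<oplus>\<^bsub>A\<^esub> p" unfolding set_add_def' by blast
      then obtain k where k: "k \<in> carrier A" "k \<otimes>\<^bsub>A\<^esub> \<pi> \<in> I" "p = \<pi> \<otimes>\<^bsub>A\<^esub> k"
        unfolding elem_times_set_def elem_ideal_quotient_def by blast
      then have "p \<in> I" using H.R.m_comm[OF pi k(1)] by simp
      moreover have "j \<in> I" using jp(1) JI by blast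
      ultimately show "x \<in> I" using jp(3) I.a_closed by simp
    qed
  qed
  then show ?thesis using a J_def by blast
qed

theorem proposition2p1:
  fixes A :: "('a, 'm) ring_scheme" and B :: "('b, 'n) ring_scheme"
    and \<phi> :: "'a \<Rightarrow> 'b" and \<pi> :: 'a
  assumes "cring A" and "cring B"
    and "\<phi> \<in> ring_hom A B" and "\<phi> ` carrier A = carrier B"
    and "\<pi> \<in> carrier A"
    and "a_kernel A B \<phi> = PIdl\<^bsub>A\<^esub> \<pi>"
  shows "(\<forall>I n. ideal I A \<longrightarrow>
            (\<exists>b :: nat \<Rightarrow> 'b. (\<forall>i<n. b i \<in> carrier B) \<and> \<phi> ` I = Idl\<^bsub>B\<^esub> (b ` {..<n})) \<longrightarrow>
            (\<exists>a :: nat \<Rightarrow> 'a. (\<forall>i<n. a i \<in> I) \<and>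
               I = Idl\<^bsub>A\<^esub> (a ` {..<n}) <+>\<^bsub>A\<^esub> elem_times_set A \<pi> (elem_ideal_quotient A I \<pi>)))
       \<and> (noetherian_ring B \<longrightarrow>
           (\<forall>I. ideal I A \<longrightarrow>
              (\<exists>n::nat. n > 0 \<and> (\<exists>a :: nat \<Rightarrow> 'a. (\<forall>i<n. a i \<in> I) \<and>
                 I = Idl\<^bsub>A\<^esub> (a ` {..<n}) <+>\<^bsub>A\<^esub> elem_times_set A \<pi> (elem_ideal_quotient A I \<pi>)))))"
  proof (intro conjI allI impI)
  fix I n
  assume "ideal I A" "\<exists>b :: nat \<Rightarrow> 'b. (\<forall>i<n. b i \<in> carrier B) \<and> \<phi> ` I = Idl\<^bsub>B\<^esub> (b ` {..<n})"
  then show "\<exists>a :: nat \<Rightarrow> 'a. (\<forall>i<n. a i \<in> I) \<and>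
               I = Idl\<^bsub>A\<^esub> (a ` {..<n}) <+>\<^bsub>A\<^esub> elem_times_set A \<pi> (elem_ideal_quotient A I \<pi>)"
    using part1[OF assms] by blast
next
  fix I assume nB: "noetherian_ring B" and I: "ideal I A"
  interpret H: ring_hom_cring A B \<phi>
    using assms by (simp add: ring_hom_cring_def ring_hom_cring_axioms_def)
  have "ideal (\<phi> ` I) B" using img_ideal[OF H.ring_hom_cring_axioms assms(4) I] .
  then obtain S where S: "S \<subseteq> carrier B" "finite S" "\<phi> ` I = Idl\<^bsub>B\<^esub> S"
    using noetherian_ring.finetely_gen[OF nB] by blast
  define S' where "S' = insert \<zero>\<^bsub>B\<^esub> S"
  have S'c: "S' \<subseteq> carrier B" using S by (auto simp: S'_def)
  have "Idl\<^bsub>B\<^esub> S' = Idl\<^bsub>B\<^esub> S"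
  proof
    have "ideal (Idl\<^bsub>B\<^esub> S) B" using H.S.genideal_ideal S by blast
    then have "\<zero>\<^bsub>B\<^esub> \<in> Idl\<^bsub>B\<^esub> S" by (simp add: additive_subgroup.zero_closed ideal.axioms(1))
    then show "Idl\<^bsub>B\<^esub> S' \<subseteq> Idl\<^bsub>B\<^esub> S"
      using H.S.genideal_minimal[OF \<open>ideal (Idl\<^bsub>B\<^esub> S) B\<close>] H.S.genideal_self[OF S(1)]
      by (simp add: S'_def)
    show "Idl\<^bsub>B\<^esub> S \<subseteq> Idl\<^bsub>B\<^esub> S'"
      using H.S.genideal_minimal[OF H.S.genideal_ideal[OF S'c]] H.S.genideal_self[OF S'c]
      by (auto simp: S'_def)
  qed
  have fS': "finite S'" using S by (simp add: S'_def)
  then obtain b where b: "bij_betw b {0..<card S'} S'" using ex_bij_betw_nat_finite by blast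
  have "b ` {..<card S'} = S'" using b by (simp add: bij_betw_def lessThan_atLeast0)
  moreover have pos: "card S' > 0" using fS' by (auto simp: S'_def card_gt_0_iff)
  ultimately have "(\<forall>i<card S'. b i \<in> carrier B) \<and> \<phi> ` I = Idl\<^bsub>B\<^esub> (b ` {..<card S'})"
    using S'c S \<open>Idl\<^bsub>B\<^esub> S' = Idl\<^bsub>B\<^esub> S\<close> by auto
  then show "\<exists>n::nat. n > 0 \<and> (\<exists>a :: nat \<Rightarrow> 'a. (\<forall>i<n. a i \<in> I) \<and>
                 I = Idl\<^bsub>A\<^esub> (a ` {..<n}) <+>\<^bsub>A\<^esub> elem_times_set A \<pi> (elem_ideal_quotient A I \<pi>))"
    using part1[OF assms I] pos by blast
qed

end
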